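(* Let $\mathcal{U}$ be a UFO tree of a tree $F$ (arbitrary degree). For any level $l>0$ of $\mathcal{U}$, the number of level-$l$ clusters is at most $5/6$ times the number of level-$(l-1)$ clusters.
   Context: UFO trees. For a tree $F$ with vertex set $V$: level-$0$ clusters are singletons; level-$i$ clusters partition $V$ into connected pieces; two are adjacent if an edge of $F$ joins them; the degree of a cluster is the number of edges of $F$ with exactly one endpoint in it, and it is high degree if this is at least $3$. Level $i+1$ arises by merging pairwise disjoint groups of level-$i$ clusters, each group being two adjacent clusters of degrees $\{1,1\}$, $\{1,2\}$ or $\{2,2\}$, or a high-degree cluster together with one or more adjacent degree-$1$ clusters, chosen maximally (each high-degree cluster is grouped with all its adjacent degree-$1$ clusters, and the remaining degree-$\le 2$ clusters are paired by a maximal matching of allowed pairs); ungrouped clusters persist. Levels are formed until $F$ is a single cluster (so level $l$ exists only if level $l-1$ has at least two clusters). *)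

theory Defs
  imports Complex_Main
begin

definition edge_set :: "'a set \<Rightarrow> 'a set set \<Rightarrow> bool" where
  "edge_set V E \<longleftrightarrow> (\<forall>e\<in>E. card e = 2 \<and> e \<subseteq> V)"

definition reach :: "'a set set \<Rightarrow> 'a set \<Rightarrow> 'a \<Rightarrow> 'a \<Rightarrow> bool" where
  "reach E S u v \<longleftrightarrow> (u, v) \<in> {(x, y). {x, y} \<in> E \<and> x \<in> S \<and> y \<in> S}\<^sup>*"

definition connected_in :: "'a set set \<Rightarrow> 'a set \<Rightarrow> bool" where
  "connected_in E S \<longleftrightarrow> S \<noteq> {} \<and> (\<forall>u\<in>S. \<forall>v\<in>S. reach E S u v)"

text \<open>tree: finite, connected, acyclic (every edge is a bridge)\<close>
definition is_tree :: "'a set \<Rightarrow> 'a set set \<Rightarrow> bool" where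
  "is_tree V E \<longleftrightarrow> finite V \<and> edge_set V E \<and> connected_in E V \<and>
     (\<forall>e\<in>E. \<forall>u v. e = {u, v} \<longrightarrow> \<not> reach (E - {e}) V u v)"

definition cdeg :: "'a set set \<Rightarrow> 'a set \<Rightarrow> nat" where
  "cdeg E C = card {e\<in>E. card (e \<inter> C) = 1}"

definition adj :: "'a set set \<Rightarrow> 'a set \<Rightarrow> 'a set \<Rightarrow> bool" where
  "adj E C D \<longleftrightarrow> C \<noteq> D \<and> (\<exists>e\<in>E. e \<inter> C \<noteq> {} \<and> e \<inter> D \<noteq> {})"

definition cluster_partition :: "'a set \<Rightarrow> 'a set set \<Rightarrow> 'a set set \<Rightarrow> bool" where
  "cluster_partition V E P \<longleftrightarrow> \<Union>P = V \<and> (\<forall>C\<in>P. connected_in E C) \<and>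
     (\<forall>C\<in>P. \<forall>D\<in>P. C \<noteq> D \<longrightarrow> C \<inter> D = {})"

definition valid_group :: "'a set set \<Rightarrow> 'a set set \<Rightarrow> 'a set set \<Rightarrow> bool" where
  "valid_group E P g \<longleftrightarrow> g \<subseteq> P \<and>
     ((\<exists>C. g = {C}) \<or>
      (\<exists>C D. g = {C, D} \<and> adj E C D \<and> cdeg E C \<in> {1, 2} \<and> cdeg E D \<in> {1, 2}) \<or>
      (\<exists>H L. g = insert H L \<and> H \<notin> L \<and> cdeg E H \<ge> 3 \<and> L \<noteq> {} \<and>
             (\<forall>C\<in>L. cdeg E C = 1 \<and> adj E H C)))"

text \<open>Q is obtained from P by one UFO merging round (with the maximality rules)\<close>
definition ufo_step :: "'a set set \<Rightarrow> 'a set set \<Rightarrow> 'a set set \<Rightarrow> bool" where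
  "ufo_step E P Q \<longleftrightarrow> (\<exists>G.
     \<Union>G = P \<and> (\<forall>g\<in>G. g \<noteq> {}) \<and> (\<forall>g1\<in>G. \<forall>g2\<in>G. g1 \<noteq> g2 \<longrightarrow> g1 \<inter> g2 = {}) \<and>
     (\<forall>g\<in>G. valid_group E P g) \<and>
     (\<forall>H\<in>P. cdeg E H \<ge> 3 \<longrightarrow>
        (\<forall>C\<in>P. adj E H C \<and> cdeg E C = 1 \<longrightarrow> (\<exists>g\<in>G. H \<in> g \<and> C \<in> g))) \<and>
     (\<forall>C\<in>P. \<forall>D\<in>P. {C} \<in> G \<and> {D} \<in> G \<and> adj E C D \<and>
        cdeg E C \<in> {1, 2} \<and> cdeg E D \<in> {1, 2} \<longrightarrow> False) \<and>
     Q = (\<lambda>g. \<Union>g) ` G)"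

definition ufo_tree :: "'a set \<Rightarrow> 'a set set \<Rightarrow> 'a set set list \<Rightarrow> bool" where
  "ufo_tree V E Ls \<longleftrightarrow> is_tree V E \<and> Ls \<noteq> [] \<and>
     Ls ! 0 = (\<lambda>v. {v}) ` V \<and>
     (\<forall>i<length Ls. cluster_partition V E (Ls ! i)) \<and>
     (\<forall>i. Suc i < length Ls \<longrightarrow> card (Ls ! i) \<ge> 2 \<and> ufo_step E (Ls ! i) (Ls ! Suc i)) \<and>
     card (last Ls) = 1"

end

theory Submission
  imports Defs
begin
locale ufo_ctx =
  fixes V :: "'a set" and E :: "'a set set" and P :: "'a set set" and G :: "'a set set set"
  assumes tree: "is_tree V E"
    and part: "cluster_partition V E P"
    and cardP: "card P \<ge> 2"
    and GU: "\<Union>G = P" and Gne: "\<forall>g\<in>G. g \<noteq> {}"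
    and Gdisj: "\<forall>g1\<in>G. \<forall>g2\<in>G. g1 \<noteq> g2 \<longrightarrow> g1 \<inter> g2 = {}"
    and Gvalid: "\<forall>g\<in>G. valid_group E P g"
    and Gforce: "\<forall>H\<in>P. cdeg E H \<ge> 3 \<longrightarrow>
        (\<forall>C\<in>P. adj E H C \<and> cdeg E C = 1 \<longrightarrow> (\<exists>g\<in>G. H \<in> g \<and> C \<in> g))"
    and Gmax: "\<forall>C\<in>P. \<forall>D\<in>P. {C} \<in> G \<and> {D} \<in> G \<and> adj E C D \<and>
        cdeg E C \<in> {1, 2} \<and> cdeg E D \<in> {1, 2} \<longrightarrow> False"
begin

lemma finV: "finite V" using tree unfolding is_tree_def by auto
lemma edgeE: "e \<in> E \<Longrightarrow> card e = 2 \<and> e \<subseteq> V"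
  using tree unfolding is_tree_def edge_set_def by auto
lemma finE: "finite E"
proof -
  have "E \<subseteq> Pow V" using edgeE by auto
  moreover have "finite (Pow V)" using finV by simp
  ultimately show ?thesis by (rule finite_subset)
qed
lemma UP: "\<Union>P = V" using part unfolding cluster_partition_def by auto
lemma finP: "finite P"
proof -
  have "P \<subseteq> Pow V" using UP by auto
  moreover have "finite (Pow V)" using finV by simp
  ultimately show ?thesis by (rule finite_subset)
qed
lemma Pconn: "C \<in> P \<Longrightarrow> connected_in E C" using part unfolding cluster_partition_def by auto
lemma Pne: "C \<in> P \<Longrightarrow> C \<noteq> {}" using Pconn unfolding connected_in_def by auto
lemma Pdisj: "C \<in> P \<Longrightarrow> D \<in> P \<Longrightarrow> C \<noteq> D \<Longrightarrow> C \<inter> D = {}"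
  using part unfolding cluster_partition_def by auto
lemma Peq: "C \<in> P \<Longrightarrow> D \<in> P \<Longrightarrow> x \<in> C \<Longrightarrow> x \<in> D \<Longrightarrow> C = D"
  using Pdisj by blast
lemma finC: assumes "C \<in> P" shows "finite C"
proof -
  have "C \<subseteq> V" using UP assms by auto
  thus ?thesis using finV by (rule finite_subset)
qed
lemma inV: "v \<in> V \<Longrightarrow> \<exists>C\<in>P. v \<in> C" using UP by auto

lemma edge2: assumes "e \<in> E" obtains a b where "a \<noteq> b" "e = {a,b}" "a \<in> V" "b \<in> V"
  using edgeE[OF assms] by (auto simp: card_2_iff)

lemma bridge: "{u,v} \<in> E \<Longrightarrow> \<not> reach (E - {{u,v}}) V u v"
  using tree unfolding is_tree_def by blast

lemma conn_V: "u \<in> V \<Longrightarrow> v \<in> V \<Longrightarrow> reach E V u v"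
  using tree unfolding is_tree_def connected_in_def by blast

lemma reach_trans: "reach F W x y \<Longrightarrow> reach F W y z \<Longrightarrow> reach F W x z"
  unfolding reach_def by (meson rtrancl_trans)

lemma reach_edge: "{x,y} \<in> F \<Longrightarrow> x \<in> W \<Longrightarrow> y \<in> W \<Longrightarrow> reach F W x y"
  unfolding reach_def by auto

lemma reach_cluster: assumes "C \<in> P" "x \<in> C" "y \<in> C" "\<not> e \<subseteq> C"
  shows "reach (E - {e}) V x y"
proof -
  have "reach E C x y" using Pconn[OF assms(1)] assms unfolding connected_in_def by blast
  moreover have "{(x, y). {x, y} \<in> E \<and> x \<in> C \<and> y \<in> C} \<subseteq> {(x, y). {x, y} \<in> E - {e} \<and> x \<in> V \<and> y \<in> V}"
    using assms(1,4) UP by auto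
  ultimately show ?thesis unfolding reach_def using rtrancl_mono by blast
qed

definition XS :: "'a set set \<Rightarrow> 'a set set" where
  "XS S = {e\<in>E. e \<subseteq> \<Union>S \<and> (\<forall>C\<in>P. \<not> e \<subseteq> C)}"

lemma finXS: "finite (XS S)" unfolding XS_def using finE by auto

lemma forest: "S \<subseteq> P \<Longrightarrow> S \<noteq> {} \<Longrightarrow> card (XS S) + 1 \<le> card S"
proof (induction "card S" arbitrary: S rule: less_induct)
  case less
  have finS: "finite S" using finite_subset[OF less.prems(1) finP] .
  show ?case
  proof (cases "XS S = {}")
    case True
    then show ?thesis using finS less.prems by (simp add: Suc_leI card_gt_0_iff)
  next
    case False
    then obtain e where eX: "e \<in> XS S" by blast
    hence eE: "e \<in> E" and eS: "e \<subseteq> \<Union>S" and eC: "\<forall>C\<in>P. \<not> e \<subseteq> C" unfolding XS_def by auto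
    obtain a b where ab: "a \<noteq> b" "e = {a,b}" "a \<in> V" "b \<in> V" using edge2[OF eE] by blast
    obtain C1 where C1: "C1 \<in> S" "a \<in> C1" using eS ab by auto
    obtain C2 where C2: "C2 \<in> S" "b \<in> C2" using eS ab by auto
    define R where "R = reach (E - {e}) V"
    define S1 where "S1 = {D\<in>S. \<exists>y\<in>D. R a y}"
    define S2 where "S2 = S - S1"
    have C1S1: "C1 \<in> S1" unfolding S1_def R_def reach_def using C1 by auto
    have C2S1: "C2 \<notin> S1"
    proof
      assume "C2 \<in> S1"
      then obtain y where y: "y \<in> C2" "R a y" unfolding S1_def by auto
      have "R y b" unfolding R_def using reach_cluster[of C2 y b e] C2 y less.prems eC by blast
      hence "R a b" using reach_trans[of "E - {e}" V a y b] y(2) unfolding R_def by simp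
      thus False using bridge[of a b] eE ab unfolding R_def by simp
    qed
    have clos: "D' \<in> S1" if f: "f \<in> E" "f \<noteq> e" "f = {p,q}" "D \<in> S1" "p \<in> D" "q \<in> D'" "D' \<in> S"
      for f p q D D'
    proof -
      obtain y where y: "y \<in> D" "R a y" "D \<in> S" using f unfolding S1_def by auto
      have DP: "D \<in> P" using y less.prems by auto
      have "R y p" unfolding R_def using reach_cluster[of D y p e] DP y f eC by blast
      moreover have "R p q"
      proof -
        have "p \<in> V" "q \<in> V" using f(1,3) edgeE by auto
        thus ?thesis unfolding R_def using f(1,2,3) reach_edge[of p q "E - {e}" V] by simp
      qed
      ultimately have "R a q" using reach_trans[of "E - {e}" V a y p] reach_trans[of "E - {e}" V a p q] y(2) unfolding R_def by simp
      thus ?thesis using f unfolding S1_def by auto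
    qed
    have sub: "XS S - {e} \<subseteq> XS S1 \<union> XS S2"
    proof
      fix f assume fX: "f \<in> XS S - {e}"
      hence fE: "f \<in> E" and fS: "f \<subseteq> \<Union>S" and fC: "\<forall>C\<in>P. \<not> f \<subseteq> C" and fe: "f \<noteq> e"
        unfolding XS_def by auto
      obtain p q where pq: "p \<noteq> q" "f = {p,q}" using edge2[OF fE] by blast
      obtain D where D: "D \<in> S" "p \<in> D" using fS pq by auto
      obtain D' where D': "D' \<in> S" "q \<in> D'" using fS pq by auto
      have fqp: "f = {q,p}" using pq by auto
      have "D \<in> S1 \<Longrightarrow> D' \<in> S1" using clos[OF fE fe pq(2) _ D(2) D'(2) D'(1)] by blast
      moreover have "D' \<in> S1 \<Longrightarrow> D \<in> S1" using clos[OF fE fe fqp _ D'(2) D(2) D(1)] by blast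
      ultimately have "D \<in> S1 \<longleftrightarrow> D' \<in> S1" by blast
      hence "f \<subseteq> \<Union>S1 \<or> f \<subseteq> \<Union>S2" using D D' pq unfolding S2_def by auto
      thus "f \<in> XS S1 \<union> XS S2" using fE fC unfolding XS_def by auto
    qed
    have S1sub: "S1 \<subseteq> P" "S1 \<noteq> {}" using C1S1 less.prems unfolding S1_def by auto
    have S2sub: "S2 \<subseteq> P" "S2 \<noteq> {}" using C2S1 C2 less.prems unfolding S2_def by auto
    have s1S': "S1 \<subseteq> S" unfolding S1_def by auto
    have ss1: "S1 \<subset> S" unfolding psubset_eq using s1S' C2S1 C2(1) by blast
    have ss2: "S2 \<subset> S" unfolding S2_def using C1S1 C1(1) by auto
    have c1: "card S1 < card S" using psubset_card_mono[OF finS ss1] .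
    have c2: "card S2 < card S" using psubset_card_mono[OF finS ss2] .
    have IH1: "card (XS S1) + 1 \<le> card S1" using less.hyps[OF c1 S1sub] .
    have IH2: "card (XS S2) + 1 \<le> card S2" using less.hyps[OF c2 S2sub] .
    have s1S: "S1 \<subseteq> S" using ss1 by blast
    have finS1: "finite S1" using finite_subset[OF s1S finS] .
    have "card S2 = card S - card S1" unfolding S2_def using card_Diff_subset[OF finS1 s1S] .
    moreover have "card S1 \<le> card S" using card_mono[OF finS s1S] .
    ultimately have cS: "card S = card S1 + card S2" by linarith
    have "card (XS S) = card (XS S - {e}) + 1" using card.remove[OF finXS eX] by simp
    also have "\<dots> \<le> card (XS S1 \<union> XS S2) + 1" using sub finXS by (simp add: card_mono)
    also have "\<dots> \<le> card (XS S1) + card (XS S2) + 1" using card_Un_le by simp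
    finally show ?thesis using IH1 IH2 cS by linarith
  qed
qed

lemma closed_all: assumes "S \<subseteq> P" "S \<noteq> {}" "\<forall>C\<in>S. \<forall>D\<in>P. adj E C D \<longrightarrow> D \<in> S"
  shows "S = P"
proof -
  obtain C0 where C0: "C0 \<in> S" using assms by auto
  obtain u where u: "u \<in> C0" using Pne C0 assms by blast
  have uV: "u \<in> V" using u C0 assms UP by auto
  have main: "z \<in> \<Union>S" if "reach E V u z" for z
    using that unfolding reach_def
  proof (induction rule: rtrancl_induct)
    case base
    then show ?case using u C0 by auto
  next
    case (step x z)
    then obtain C where C: "C \<in> S" "x \<in> C" by auto
    have zV: "z \<in> V" using step by auto
    then obtain D where D: "D \<in> P" "z \<in> D" using inV by blast
    show ?case
    proof (cases "D = C")
      case True thus ?thesis using C D by auto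
    next
      case False
      have "adj E C D" unfolding adj_def using False step C D by (intro conjI bexI[of _ "{x,z}"]) auto
      hence "D \<in> S" using assms(3) C D by blast
      thus ?thesis using D by auto
    qed
  qed
  show ?thesis
  proof
    show "P \<subseteq> S"
    proof
      fix D assume D: "D \<in> P"
      then obtain y where y: "y \<in> D" using Pne by blast
      have "y \<in> V" using D y UP by auto
      hence "y \<in> \<Union>S" using main conn_V uV by blast
      then obtain C' where "C' \<in> S" "y \<in> C'" by auto
      thus "D \<in> S" using Peq[of C' D y] D y assms(1) by auto
    qed
  qed (use assms in auto)
qed

end

context ufo_ctx begin

definition inc :: "'a set \<Rightarrow> 'a set set" where "inc C = {e\<in>E. card (e \<inter> C) = 1}"
lemma cdeg_inc: "cdeg E C = card (inc C)" unfolding cdeg_def inc_def by simp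
lemma fin_inc: "finite (inc C)" unfolding inc_def using finE by auto

lemma inc_iff: assumes "e \<in> E" shows "card (e \<inter> C) = 1 \<longleftrightarrow> (e \<inter> C \<noteq> {} \<and> \<not> e \<subseteq> C)"
proof -
  obtain a b where ab: "a \<noteq> b" "e = {a,b}" using edge2[OF assms] by blast
  show ?thesis using ab by (cases "a \<in> C"; cases "b \<in> C") (auto simp: Int_insert_left)
qed

lemma adj_sym: "adj E C D \<longleftrightarrow> adj E D C" unfolding adj_def by blast

lemma adj_edge: assumes "C \<in> P" "D \<in> P" "adj E C D"
  obtains e where "e \<in> inc C" "e \<inter> D \<noteq> {}" "e \<inter> C \<noteq> {}"
proof -
  obtain e where e: "e \<in> E" "e \<inter> C \<noteq> {}" "e \<inter> D \<noteq> {}" "C \<noteq> D" using assms unfolding adj_def by blast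
  have "\<not> e \<subseteq> C" using e Pdisj[OF assms(1,2)] by blast
  hence "e \<in> inc C" using e inc_iff unfolding inc_def by auto
  thus ?thesis using that e by blast
qed

lemma adj_deg: assumes "C \<in> P" "D \<in> P" "adj E C D" shows "cdeg E C \<ge> 1"
proof -
  obtain e where "e \<in> inc C" using adj_edge[OF assms] by blast
  hence "inc C \<noteq> {}" by auto
  thus ?thesis using fin_inc cdeg_inc by (simp add: Suc_leI card_gt_0_iff)
qed

lemma uniq_other: assumes "e \<in> E" "C \<in> P" "D \<in> P" "D' \<in> P" "D \<noteq> C" "D' \<noteq> C"
  "e \<inter> C \<noteq> {}" "e \<inter> D \<noteq> {}" "e \<inter> D' \<noteq> {}" shows "D = D'"
proof -
  obtain a b where ab: "a \<noteq> b" "e = {a,b}" using edge2[OF assms(1)] by blast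
  have "a \<in> C \<or> b \<in> C" using ab assms(7) by auto
  moreover have "a \<in> D \<or> b \<in> D" using ab assms(8) by auto
  moreover have "a \<in> D' \<or> b \<in> D'" using ab assms(9) by auto
  moreover have "\<not> (a \<in> C \<and> a \<in> D)" "\<not> (b \<in> C \<and> b \<in> D)" "\<not> (a \<in> C \<and> a \<in> D')" "\<not> (b \<in> C \<and> b \<in> D')"
    using Peq[OF assms(2) assms(3)] Peq[OF assms(2) assms(4)] assms(5,6) by auto
  ultimately show ?thesis using Peq[OF assms(3) assms(4)] by blast
qed

definition nb :: "'a set \<Rightarrow> 'a set set" where "nb C = {D\<in>P. adj E C D}"

lemma nb_card: assumes "C \<in> P" shows "card (nb C) \<le> cdeg E C"
proof -
  define f where "f e = (SOME D. D \<in> P \<and> D \<noteq> C \<and> e \<inter> D \<noteq> {})" for e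
  have "nb C \<subseteq> f ` inc C"
  proof
    fix D assume "D \<in> nb C"
    hence D: "D \<in> P" "adj E C D" unfolding nb_def by auto
    obtain e where e: "e \<in> inc C" "e \<inter> D \<noteq> {}" "e \<inter> C \<noteq> {}" using adj_edge[OF assms D] by blast
    have DC: "D \<noteq> C" using D unfolding adj_def by auto
    have "f e \<in> P \<and> f e \<noteq> C \<and> e \<inter> f e \<noteq> {}" unfolding f_def
      by (rule someI[of _ D]) (use D DC e in auto)
    hence "f e = D" using uniq_other[of e C "f e" D] e D DC assms unfolding inc_def by auto
    thus "D \<in> f ` inc C" using e by blast
  qed
  hence "card (nb C) \<le> card (f ` inc C)" using fin_inc by (simp add: card_mono)
  also have "\<dots> \<le> card (inc C)" using card_image_le fin_inc by blast
  finally show ?thesis using cdeg_inc by simp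
qed

lemma fin_nb: "finite (nb C)" unfolding nb_def using finP by auto

lemma has_nb: assumes "C \<in> P" "cdeg E C \<ge> 1" obtains D where "D \<in> P" "adj E C D"
proof -
  have "inc C \<noteq> {}" using assms cdeg_inc by (auto simp: card_gt_0_iff)
  then obtain e where e: "e \<in> inc C" by blast
  hence eE: "e \<in> E" and "e \<inter> C \<noteq> {}" "\<not> e \<subseteq> C" using inc_iff unfolding inc_def by auto
  then obtain b where b: "b \<in> e" "b \<notin> C" by auto
  have "b \<in> V" using b eE edgeE by auto
  then obtain D where D: "D \<in> P" "b \<in> D" using inV by blast
  have "adj E C D" unfolding adj_def using D b eE \<open>e \<inter> C \<noteq> {}\<close> by auto
  thus ?thesis using that D by blast
qed

lemma deg_pos: assumes "C \<in> P" shows "cdeg E C \<ge> 1"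
proof (rule ccontr)
  assume "\<not> ?thesis"
  hence "\<forall>D\<in>P. \<not> adj E C D" using adj_deg assms by fastforce
  hence "{C} = P" using closed_all[of "{C}"] assms by auto
  thus False using cardP by auto
qed

lemma handshake: "(\<Sum>C\<in>P. cdeg E C) = 2 * card (XS P)"
proof -
  have eq: "inc C = {e\<in>XS P. card (e \<inter> C) = 1}" if C: "C \<in> P" for C
  proof -
    have "e \<in> XS P" if e: "e \<in> inc C" for e
    proof -
      have eE: "e \<in> E" and ne: "e \<inter> C \<noteq> {}" "\<not> e \<subseteq> C" using e inc_iff unfolding inc_def by auto
      have "\<not> e \<subseteq> C'" if "C' \<in> P" for C' using Peq[OF C that] ne by blast
      thus ?thesis unfolding XS_def using eE edgeE UP by auto
    qed
    thus ?thesis unfolding inc_def XS_def by auto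
  qed
  have two: "card {C\<in>P. card (e \<inter> C) = 1} = 2" if e: "e \<in> XS P" for e
  proof -
    have eE: "e \<in> E" and eC: "\<forall>C\<in>P. \<not> e \<subseteq> C" using e unfolding XS_def by auto
    obtain a b where ab: "a \<noteq> b" "e = {a,b}" "a \<in> V" "b \<in> V" using edge2[OF eE] by blast
    obtain Ca where Ca: "Ca \<in> P" "a \<in> Ca" using inV ab by blast
    obtain Cb where Cb: "Cb \<in> P" "b \<in> Cb" using inV ab by blast
    have ne: "Ca \<noteq> Cb" using eC Ca Cb ab by auto
    have "{C\<in>P. card (e \<inter> C) = 1} = {Ca, Cb}"
    proof (intro equalityI subsetI)
      fix C assume "C \<in> {C\<in>P. card (e \<inter> C) = 1}"
      hence "C \<in> P" "e \<inter> C \<noteq> {}" using inc_iff eE by auto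
      thus "C \<in> {Ca, Cb}" using ab Ca Cb Peq by blast
    next
      fix C assume "C \<in> {Ca, Cb}"
      thus "C \<in> {C\<in>P. card (e \<inter> C) = 1}" using inc_iff[OF eE] Ca Cb eC ab by auto
    qed
    thus ?thesis using ne by simp
  qed
  have "(\<Sum>C\<in>P. cdeg E C) = (\<Sum>C\<in>P. card {e\<in>XS P. card (e \<inter> C) = 1})"
    using eq cdeg_inc by (intro sum.cong) auto
  also have "\<dots> = 2 * card (XS P)"
    by (rule sum_multicount) (use finP finXS two in auto)
  finally show ?thesis .
qed

definition Hall where "Hall = {C\<in>P. cdeg E C \<ge> 3}"
definition Leaves where "Leaves = {C\<in>P. cdeg E C = 1}"

lemma B3: "card Hall + 2 \<le> card Leaves"
proof -
  have f1: "(\<Sum>C\<in>P. cdeg E C) + 2 \<le> 2 * card P"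
  proof -
    have "P \<noteq> {}" using cardP by auto
    hence "card (XS P) + 1 \<le> card P" using forest[of P] by simp
    thus ?thesis using handshake by simp
  qed
  have "(\<Sum>C\<in>P. 2 + (if C \<in> Hall then 1 else 0)) \<le> (\<Sum>C\<in>P. cdeg E C + (if C \<in> Leaves then 1 else 0))"
  proof (rule sum_mono)
    fix C assume "C \<in> P" thus "2 + (if C \<in> Hall then 1 else 0) \<le> cdeg E C + (if C \<in> Leaves then 1 else 0)"
      using deg_pos[of C] unfolding Hall_def Leaves_def by auto
  qed
  note mono = this
  have ind: "(\<Sum>C\<in>P. (if C \<in> A then 1 else 0::nat)) = card A" if "A \<subseteq> P" for A
  proof -
    have "(\<Sum>C\<in>P. (if C \<in> A then 1 else 0::nat)) = sum (\<lambda>_. 1) {C\<in>P. C \<in> A}"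
      using sum.inter_filter[OF finP, of "\<lambda>_. 1::nat" "\<lambda>C. C \<in> A"] by simp
    also have "{C\<in>P. C \<in> A} = A" using that by auto
    finally show ?thesis by simp
  qed
  have HP: "Hall \<subseteq> P" and LP: "Leaves \<subseteq> P" unfolding Hall_def Leaves_def by auto
  have "(\<Sum>C\<in>P. 2 + (if C \<in> Hall then 1 else 0::nat)) = (\<Sum>C\<in>P. 2) + (\<Sum>C\<in>P. (if C \<in> Hall then 1 else 0::nat))"
    by (rule sum.distrib)
  also have "\<dots> = 2 * card P + card Hall" using ind[OF HP] by simp
  finally have e1: "(\<Sum>C\<in>P. 2 + (if C \<in> Hall then 1 else 0::nat)) = 2 * card P + card Hall" .
  have "(\<Sum>C\<in>P. cdeg E C + (if C \<in> Leaves then 1 else 0::nat)) = (\<Sum>C\<in>P. cdeg E C) + (\<Sum>C\<in>P. (if C \<in> Leaves then 1 else 0::nat))"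
    by (rule sum.distrib)
  also have "\<dots> = (\<Sum>C\<in>P. cdeg E C) + card Leaves" using ind[OF LP] by simp
  finally have e2: "(\<Sum>C\<in>P. cdeg E C + (if C \<in> Leaves then 1 else 0::nat)) = (\<Sum>C\<in>P. cdeg E C) + card Leaves" .
  have "2 * card P + card Hall \<le> (\<Sum>C\<in>P. cdeg E C) + card Leaves" using mono unfolding e1 e2 .
  thus ?thesis using f1 by linarith
qed

end

context ufo_ctx begin

definition Gs where "Gs = {g\<in>G. \<exists>C. g = {C}}"
definition Gp where "Gp = {g\<in>G. \<exists>C D. g = {C,D} \<and> adj E C D \<and> cdeg E C \<in> {1,2} \<and> cdeg E D \<in> {1,2}}"
definition Gst where "Gst = {g\<in>G. \<exists>H L. g = insert H L \<and> H \<notin> L \<and> cdeg E H \<ge> 3 \<and> L \<noteq> {} \<and>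
             (\<forall>C\<in>L. cdeg E C = 1 \<and> adj E H C)}"
definition Sing where "Sing = {C\<in>P. {C} \<in> G}"

lemma G_sub: "g \<in> G \<Longrightarrow> g \<subseteq> P" using GU by auto
lemma finG: "finite G"
proof -
  have "G \<subseteq> Pow P" using GU by auto
  moreover have "finite (Pow P)" using finP by simp
  ultimately show ?thesis by (rule finite_subset)
qed
lemma fing: "g \<in> G \<Longrightarrow> finite g" by (rule finite_subset[OF G_sub finP])

lemma G_split: "G = Gs \<union> Gp \<union> Gst"
proof (intro equalityI subsetI)
  fix g assume g: "g \<in> G"
  have v: "valid_group E P g" using Gvalid g by blast
  hence "(\<exists>C. g = {C}) \<or>
      (\<exists>C D. g = {C, D} \<and> adj E C D \<and> cdeg E C \<in> {1, 2} \<and> cdeg E D \<in> {1, 2}) \<or>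
      (\<exists>H L. g = insert H L \<and> H \<notin> L \<and> cdeg E H \<ge> 3 \<and> L \<noteq> {} \<and>
             (\<forall>C\<in>L. cdeg E C = 1 \<and> adj E H C))" unfolding valid_group_def by (rule conjunct2)
  thus "g \<in> Gs \<union> Gp \<union> Gst"
  proof (elim disjE)
    assume "\<exists>C. g = {C}" thus ?thesis unfolding Gs_def using g by simp
  next
    assume "\<exists>C D. g = {C, D} \<and> adj E C D \<and> cdeg E C \<in> {1, 2} \<and> cdeg E D \<in> {1, 2}"
    thus ?thesis unfolding Gp_def using g by simp
  next
    assume "\<exists>H L. g = insert H L \<and> H \<notin> L \<and> cdeg E H \<ge> 3 \<and> L \<noteq> {} \<and>
             (\<forall>C\<in>L. cdeg E C = 1 \<and> adj E H C)"
    thus ?thesis unfolding Gst_def using g by simp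
  qed
qed (auto simp: Gs_def Gp_def Gst_def)

lemma sing_pair: assumes "{C} = {C', D'}" shows "C' = D'"
proof -
  have "C' \<in> {C', D'}" "D' \<in> {C', D'}" by simp_all
  hence "C' \<in> {C}" "D' \<in> {C}" unfolding assms[symmetric] .
  thus ?thesis by simp
qed

lemma G_disj: "Gs \<inter> Gp = {}" "Gs \<inter> Gst = {}" "Gp \<inter> Gst = {}"
proof -
  show "Gs \<inter> Gp = {}"
  proof (rule ccontr)
    assume "Gs \<inter> Gp \<noteq> {}"
    then obtain g where g: "g \<in> Gs" "g \<in> Gp" by blast
    from g(1) obtain C where C: "g = {C}" unfolding Gs_def by auto
    from g(2) obtain C' D' where CD: "g = {C',D'}" "adj E C' D'" unfolding Gp_def by auto
    have "C' = D'" using sing_pair[of C C' D'] C CD by simp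
    thus False using CD unfolding adj_def by simp
  qed
  show "Gs \<inter> Gst = {}"
  proof (rule ccontr)
    assume "Gs \<inter> Gst \<noteq> {}"
    then obtain g where g: "g \<in> Gs" "g \<in> Gst" by blast
    from g(1) obtain C where C: "g = {C}" unfolding Gs_def by auto
    from g(2) obtain H L where h: "g = insert H L" "H \<notin> L" "L \<noteq> {}" unfolding Gst_def by auto
    then obtain x where x: "x \<in> L" by blast
    have "x \<in> {C}" "H \<in> {C}" using h(1) x C by auto
    thus False using x h(2) by simp
  qed
  show "Gp \<inter> Gst = {}"
  proof (rule ccontr)
    assume "Gp \<inter> Gst \<noteq> {}"
    then obtain g where g: "g \<in> Gp" "g \<in> Gst" by blast
    from g(1) obtain C D where CD: "g = {C,D}" "cdeg E C \<in> {1,2}" "cdeg E D \<in> {1,2}" unfolding Gp_def by auto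
    from g(2) obtain H L where h: "g = insert H L" "cdeg E H \<ge> 3" unfolding Gst_def by auto
    have "H = C \<or> H = D" using h(1) CD(1) by auto
    thus False using h CD by auto
  qed
qed

lemma grp_uniq: "g \<in> G \<Longrightarrow> g' \<in> G \<Longrightarrow> C \<in> g \<Longrightarrow> C \<in> g' \<Longrightarrow> g = g'"
  using Gdisj by blast

lemma in_grp: "C \<in> P \<Longrightarrow> \<exists>g\<in>G. C \<in> g" using GU by auto

lemma sing_grp: "{C} \<in> G \<Longrightarrow> g \<in> G \<Longrightarrow> C \<in> g \<Longrightarrow> g = {C}" using grp_uniq by blast

lemma force_not_sing: assumes "H \<in> P" "cdeg E H \<ge> 3" "C \<in> P" "adj E H C" "cdeg E C = 1"
  shows "{C} \<notin> G" "{H} \<notin> G"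
proof -
  obtain g where g: "g \<in> G" "H \<in> g" "C \<in> g" using Gforce assms by blast
  have HC: "H \<noteq> C" using assms unfolding adj_def by auto
  show "{C} \<notin> G" using sing_grp[OF _ g(1) g(3)] g HC by auto
  show "{H} \<notin> G" using sing_grp[OF _ g(1) g(2)] g HC by auto
qed

definition PN where "PN = \<Union>Gp"

lemma nbr_class: assumes "C \<in> Sing" "cdeg E C \<in> {1,2}" "D \<in> P" "adj E C D" "D \<notin> PN"
  shows "cdeg E D \<ge> 3"
proof -
  have CP: "C \<in> P" and CG: "{C} \<in> G" using assms(1) unfolding Sing_def by auto
  obtain g where g: "g \<in> G" "D \<in> g" using in_grp assms(3) by blast
  have aDC: "adj E D C" using assms(4) adj_sym by blast
  have Dpos: "cdeg E D \<ge> 1" using adj_deg[OF assms(3) CP aDC] .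
  have "g \<in> Gs \<or> g \<in> Gp \<or> g \<in> Gst" using G_split g(1) by blast
  moreover have ?thesis if gs: "g \<in> Gs"
  proof (rule ccontr)
    assume "\<not> ?thesis"
    hence dD: "cdeg E D \<in> {1,2}" using Dpos by auto
    obtain C0 where "g = {C0}" using gs unfolding Gs_def by auto
    hence "g = {D}" using g(2) by simp
    hence DG: "{D} \<in> G" using g(1) by simp
    have "{C} \<in> G \<and> {D} \<in> G \<and> adj E C D \<and> cdeg E C \<in> {1, 2} \<and> cdeg E D \<in> {1, 2}"
      using CG DG assms(4) assms(2) dD by simp
    from Gmax[rule_format, OF CP assms(3) this] show False .
  qed
  moreover have "g \<notin> Gp"
  proof
    assume "g \<in> Gp"
    hence "D \<in> PN" unfolding PN_def using g(2) by (rule UnionI)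
    thus False using assms(5) by simp
  qed
  moreover have ?thesis if gst: "g \<in> Gst"
  proof -
    obtain H L where HL: "g = insert H L" "H \<notin> L" "cdeg E H \<ge> 3" "\<forall>C\<in>L. cdeg E C = 1 \<and> adj E H C"
      using gst unfolding Gst_def by blast
    show ?thesis
    proof (cases "D = H")
      case True thus ?thesis using HL(3) by simp
    next
      case False
      hence DL: "D \<in> L" using HL(1) g(2) by simp
      have HP: "H \<in> P" using HL(1) G_sub[OF g(1)] by simp
      have dD: "cdeg E D = 1" and aHD: "adj E H D" using HL(4) DL by auto
      have aDH: "adj E D H" using aHD adj_sym by blast
      have Hn: "H \<in> nb D" unfolding nb_def using HP aDH by simp
      have Cn: "C \<in> nb D" unfolding nb_def using CP aDC by simp
      have "card (nb D) \<le> 1" using nb_card[OF assms(3)] dD by simp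
      hence "C = H" using Hn Cn fin_nb[of D] card_le_Suc0_iff_eq[of "nb D"] by auto
      thus ?thesis using HL(3) assms(2) by auto
    qed
  qed
  ultimately show ?thesis by blast
qed

definition Ng where "Ng g = {C\<in>Sing. \<exists>w\<in>g. adj E w C}"
definition Ag where "Ag g = Leaves \<inter> (g \<union> Ng g)"
definition Bset where "Bset = {C\<in>Sing. cdeg E C = 2 \<and> (\<forall>D\<in>P. adj E C D \<longrightarrow> cdeg E D \<ge> 3)}"

lemma sing_classify: assumes "C \<in> Sing" "C \<notin> Hall"
  shows "C \<in> (\<Union>g\<in>Gp. Ng g) \<or> C \<in> Bset"
proof (rule ccontr)
  assume a: "\<not> ?thesis"
  have CP: "C \<in> P" and CG: "{C} \<in> G" using assms unfolding Sing_def by auto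
  have dC: "cdeg E C \<in> {1,2}" using deg_pos[OF CP] assms CP unfolding Hall_def by auto
  have hi: "cdeg E D \<ge> 3" if "D \<in> P" "adj E C D" for D
  proof (rule nbr_class[OF assms(1) dC that])
    show "D \<notin> PN"
    proof
      assume "D \<in> PN"
      then obtain g where "g \<in> Gp" "D \<in> g" unfolding PN_def by auto
      hence "C \<in> Ng g" unfolding Ng_def using assms that adj_sym by blast
      thus False using a \<open>g \<in> Gp\<close> by blast
    qed
  qed
  show False
  proof (cases "cdeg E C = 2")
    case True
    thus False using a hi assms unfolding Bset_def by blast
  next
    case False
    hence d1: "cdeg E C = 1" using dC by auto
    obtain D where D: "D \<in> P" "adj E C D" using has_nb[OF CP] d1 by auto
    have "{C} \<notin> G" using force_not_sing(1)[of D C] D hi CP d1 adj_sym by blast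
    thus False using CG by simp
  qed
qed

lemma B1: "card Sing \<le> (\<Sum>g\<in>Gp. card (Ng g)) + card Bset + card Hall"
proof -
  have sub1: "Sing \<subseteq> (\<Union>g\<in>Gp. Ng g) \<union> Bset \<union> Hall" using sing_classify by blast
  have sub2: "(\<Union>g\<in>Gp. Ng g) \<union> Bset \<union> Hall \<subseteq> P" unfolding Ng_def Sing_def Bset_def Hall_def by auto
  have "card Sing \<le> card ((\<Union>g\<in>Gp. Ng g) \<union> Bset \<union> Hall)"
    by (rule card_mono[OF finite_subset[OF sub2 finP] sub1])
  also have "\<dots> \<le> card (\<Union>g\<in>Gp. Ng g) + card Bset + card Hall"
    by (meson add_le_mono card_Un_le le_refl order_trans)
  also have "card (\<Union>g\<in>Gp. Ng g) \<le> (\<Sum>g\<in>Gp. card (Ng g))" by (rule card_UN_le) (use finG in \<open>auto simp: Gp_def\<close>)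
  finally show ?thesis by simp
qed

end

context ufo_ctx begin

lemma not_sub_other: assumes "C \<in> P" "e \<inter> C \<noteq> {}" "\<not> e \<subseteq> C" shows "\<forall>C'\<in>P. \<not> e \<subseteq> C'"
proof (intro ballI notI)
  fix C' assume C': "C' \<in> P" "e \<subseteq> C'"
  obtain x where x: "x \<in> e" "x \<in> C" using assms(2) by blast
  have "x \<in> C'" using x C' by blast
  hence "C = C'" using Peq[OF assms(1) C'(1) x(2)] by simp
  thus False using assms(3) C'(2) by simp
qed

lemma B2: assumes "Hall \<noteq> {}" shows "card Bset + 1 \<le> card Hall"
proof -
  define S where "S = Hall \<union> Bset"
  have HP: "Hall \<subseteq> P" unfolding Hall_def by auto
  have BsP: "Bset \<subseteq> P" unfolding Bset_def Sing_def by auto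
  have SP: "S \<subseteq> P" "S \<noteq> {}" using assms HP BsP unfolding S_def by auto
  have disj: "Hall \<inter> Bset = {}" unfolding Hall_def Bset_def by auto
  have finH: "finite Hall" "finite Bset" using finite_subset[OF HP finP] finite_subset[OF BsP finP] by auto
  have cS: "card S = card Hall + card Bset" unfolding S_def using card_Un_disjoint[OF finH disj] .
  have sub: "(\<Union>b\<in>Bset. inc b) \<subseteq> XS S"
  proof (intro UN_least subsetI)
    fix b e assume b: "b \<in> Bset" and e: "e \<in> inc b"
    have bP: "b \<in> P" using BsP b by blast
    have eE: "e \<in> E" using e unfolding inc_def by simp
    have ne: "e \<inter> b \<noteq> {}" "\<not> e \<subseteq> b" using e inc_iff[OF eE] unfolding inc_def by auto
    then obtain c where c: "c \<in> e" "c \<notin> b" by auto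
    have "c \<in> V" using c eE edgeE by auto
    then obtain D where D: "D \<in> P" "c \<in> D" using inV by blast
    have DB: "D \<noteq> b" using c D by auto
    have "adj E b D" unfolding adj_def using DB eE ne(1) c D by blast
    hence DH: "D \<in> Hall" using b D unfolding Bset_def Hall_def by auto
    obtain p q where pq: "p \<noteq> q" "e = {p,q}" using edge2[OF eE] by blast
    have "e \<subseteq> b \<union> D" using pq c ne D(2) by auto
    hence "e \<subseteq> \<Union>S" using b DH unfolding S_def by auto
    moreover have "\<forall>C\<in>P. \<not> e \<subseteq> C" using not_sub_other[OF bP ne] .
    ultimately show "e \<in> XS S" unfolding XS_def using eE by simp
  qed
  have dj: "\<forall>b\<in>Bset. \<forall>b'\<in>Bset. b \<noteq> b' \<longrightarrow> inc b \<inter> inc b' = {}"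
  proof (intro ballI impI)
    fix b b' assume bb: "b \<in> Bset" "b' \<in> Bset" "b \<noteq> b'"
    show "inc b \<inter> inc b' = {}"
    proof (rule ccontr)
      assume "inc b \<inter> inc b' \<noteq> {}"
      then obtain e where e: "e \<in> inc b" "e \<in> inc b'" by auto
      have eE: "e \<in> E" using e unfolding inc_def by simp
      have "e \<inter> b \<noteq> {}" "e \<inter> b' \<noteq> {}" using e inc_iff[OF eE] unfolding inc_def by auto
      hence "adj E b b'" unfolding adj_def using bb(3) eE by blast
      moreover have "b' \<in> P" using bb(2) BsP by blast
      ultimately have "cdeg E b' \<ge> 3" using bb(1) unfolding Bset_def by auto
      thus False using bb(2) unfolding Bset_def by auto
    qed
  qed
  have "card (\<Union>b\<in>Bset. inc b) = (\<Sum>b\<in>Bset. card (inc b))"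
    by (rule card_UN_disjoint) (use finH fin_inc dj in auto)
  also have "\<dots> = (\<Sum>b\<in>Bset. 2)" using cdeg_inc unfolding Bset_def by (intro sum.cong) auto
  finally have "2 * card Bset \<le> card (XS S)"
    using card_mono[OF finXS sub] by simp
  thus ?thesis using forest[OF SP] cS by linarith
qed

lemma B4: "card Leaves \<le> (\<Sum>g\<in>Gst. card (Leaves \<inter> g)) + (\<Sum>g\<in>Gp. card (Ag g))"
proof -
  have sub1: "Leaves \<subseteq> (\<Union>g\<in>Gst. Leaves \<inter> g) \<union> (\<Union>g\<in>Gp. Ag g)"
  proof
    fix C assume C: "C \<in> Leaves"
    let ?goal = "C \<in> (\<Union>g\<in>Gst. Leaves \<inter> g) \<union> (\<Union>g\<in>Gp. Ag g)"
    have CP: "C \<in> P" using C unfolding Leaves_def by auto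
    obtain g where g: "g \<in> G" "C \<in> g" using in_grp CP by blast
    have "g \<in> Gs \<or> g \<in> Gp \<or> g \<in> Gst" using G_split g(1) by blast
    moreover have ?goal if gs: "g \<in> Gs"
    proof -
      obtain C0 where "g = {C0}" using gs unfolding Gs_def by auto
      hence "g = {C}" using g(2) by simp
      hence "C \<in> Sing" using g(1) CP unfolding Sing_def by simp
      moreover have "C \<notin> Hall" "C \<notin> Bset" using C unfolding Leaves_def Hall_def Bset_def by auto
      ultimately have "C \<in> (\<Union>g\<in>Gp. Ng g)" using sing_classify by blast
      then obtain g' where "g' \<in> Gp" "C \<in> Ng g'" by blast
      hence "C \<in> Ag g'" using C unfolding Ag_def by blast
      thus ?goal using \<open>g' \<in> Gp\<close> by blast
    qed
    moreover have ?goal if "g \<in> Gp"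
    proof -
      have "C \<in> Ag g" using g(2) C unfolding Ag_def by blast
      thus ?goal using that by blast
    qed
    moreover have ?goal if "g \<in> Gst"
    proof -
      have "C \<in> Leaves \<inter> g" using g(2) C by blast
      thus ?goal using that by blast
    qed
    ultimately show ?goal by blast
  qed
  have sub2: "(\<Union>g\<in>Gst. Leaves \<inter> g) \<union> (\<Union>g\<in>Gp. Ag g) \<subseteq> P" unfolding Ag_def Leaves_def by auto
  have "card Leaves \<le> card ((\<Union>g\<in>Gst. Leaves \<inter> g) \<union> (\<Union>g\<in>Gp. Ag g))"
    by (rule card_mono[OF finite_subset[OF sub2 finP] sub1])
  also have "\<dots> \<le> card (\<Union>g\<in>Gst. Leaves \<inter> g) + card (\<Union>g\<in>Gp. Ag g)" by (rule card_Un_le)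
  also have "\<dots> \<le> (\<Sum>g\<in>Gst. card (Leaves \<inter> g)) + (\<Sum>g\<in>Gp. card (Ag g))"
  proof (rule add_mono)
    have fs: "finite Gst" "finite Gp" using finite_subset[OF _ finG] unfolding Gst_def Gp_def by auto
    show "card (\<Union>g\<in>Gst. Leaves \<inter> g) \<le> (\<Sum>g\<in>Gst. card (Leaves \<inter> g))" by (rule card_UN_le[OF fs(1)])
    show "card (\<Union>g\<in>Gp. Ag g) \<le> (\<Sum>g\<in>Gp. card (Ag g))" by (rule card_UN_le[OF fs(2)])
  qed
  finally show ?thesis .
qed

lemma Gst_elim: assumes "g \<in> Gst"
  obtains H L where "g = insert H L" "H \<notin> L" "cdeg E H \<ge> 3" "L \<noteq> {}" "\<forall>C\<in>L. cdeg E C = 1 \<and> adj E H C" "g \<in> G"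
  using assms unfolding Gst_def by auto

lemma B5: assumes g: "g \<in> Gst" shows "card (Leaves \<inter> g) + 1 \<le> card g"
proof -
  obtain H L where HL: "g = insert H L" "cdeg E H \<ge> 3" "g \<in> G" using Gst_elim[OF g] by metis
  have sub: "Leaves \<inter> g \<subseteq> g - {H}" using HL(2) unfolding Leaves_def by auto
  have fg: "finite g" using fing[OF HL(3)] .
  have "card (Leaves \<inter> g) \<le> card (g - {H})" using card_mono[OF _ sub] fg by simp
  moreover have "card g = Suc (card (g - {H}))" using card.remove[OF fg, of H] HL(1) by simp
  ultimately show ?thesis by simp
qed

lemma B5': assumes g: "g \<in> Gst" shows "2 \<le> card g"
proof -
  obtain H L where HL: "g = insert H L" "H \<notin> L" "L \<noteq> {}" "g \<in> G" using Gst_elim[OF g] by metis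
  have "finite L" using fing[OF HL(4)] HL(1) by simp
  hence "card L \<ge> 1" using HL(3) by (simp add: Suc_leI card_gt_0_iff)
  thus ?thesis using HL(1,2) \<open>finite L\<close> by simp
qed

definition Nn where "Nn y = {C\<in>Sing. adj E y C}"

lemma card_int_single: "card (A \<inter> {y}) \<le> 1"
  by (cases "y \<in> A") (auto simp: Int_insert_right)

lemma two_elem: assumes "finite A" "card A \<le> 2" "a \<in> A" "b \<in> A" "a \<noteq> b" shows "A = {a,b}"
proof -
  have s: "{a,b} \<subseteq> A" using assms by auto
  have "card {a,b} = 2" using assms by simp
  hence "card A \<le> card {a,b}" using assms by simp
  from card_seteq[OF assms(1) s this] show ?thesis by simp
qed

lemma one_elem: "finite A \<Longrightarrow> card A \<le> 1 \<Longrightarrow> a \<in> A \<Longrightarrow> A \<subseteq> {a}"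
  using card_le_Suc0_iff_eq[of A] by auto

lemma pn_node: assumes "y \<in> P" "z \<in> P" "adj E y z" "cdeg E y \<in> {1,2}" "z \<notin> Sing"
  shows "card (Nn y) \<le> 1" "cdeg E y = 1 \<Longrightarrow> Nn y = {}" "Nn y \<subseteq> nb y - {z}" "z \<in> nb y"
proof -
  show sub: "Nn y \<subseteq> nb y - {z}" unfolding Nn_def nb_def Sing_def using assms(5) unfolding Sing_def by auto
  show zn: "z \<in> nb y" unfolding nb_def using assms by auto
  have c: "card (nb y) \<le> 2" using nb_card[OF assms(1)] assms by auto
  have "card (nb y - {z}) \<le> 1" using c zn fin_nb by auto
  thus "card (Nn y) \<le> 1" using sub by (meson card_mono fin_nb finite_Diff le_trans)
  show "Nn y = {}" if "cdeg E y = 1"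
  proof -
    have "card (nb y - {z}) = 0" using nb_card[OF assms(1)] that zn fin_nb by auto
    hence "nb y - {z} = {}" using fin_nb by auto
    thus ?thesis using sub by auto
  qed
qed

definition leafy where "leafy y \<longleftrightarrow> Leaves \<inter> ({y} \<union> Nn y) \<noteq> {}"

lemma leafy_facts: assumes "y \<in> P" "z \<in> P" "adj E y z" "cdeg E y \<in> {1,2}" "z \<notin> Sing" "leafy y"
  shows "nb y \<subseteq> {z} \<union> Nn y" "Nn y \<subseteq> Leaves" "\<And>l. l \<in> Nn y \<Longrightarrow> nb l \<subseteq> {y}"
proof -
  note pn = pn_node[OF assms(1-5)]
  have finNn: "finite (Nn y)" using finite_subset[OF _ finP, of "Nn y"] unfolding Nn_def Sing_def by auto
  have lf: "\<exists>l. l \<in> Leaves \<and> l \<in> Nn y" if "cdeg E y \<noteq> 1"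
  proof -
    have "y \<notin> Leaves" using that unfolding Leaves_def by auto
    thus ?thesis using assms(6) unfolding leafy_def by blast
  qed
  have NnL: "Nn y \<subseteq> Leaves"
  proof (cases "cdeg E y = 1")
    case True thus ?thesis using pn(2) by simp
  next
    case False
    then obtain l where l: "l \<in> Leaves" "l \<in> Nn y" using lf by blast
    have "Nn y \<subseteq> {l}" using one_elem[OF finNn pn(1) l(2)] .
    thus ?thesis using l(1) by blast
  qed
  show "Nn y \<subseteq> Leaves" by fact
  show "nb y \<subseteq> {z} \<union> Nn y"
  proof (cases "cdeg E y = 1")
    case True
    have "card (nb y) \<le> 1" using nb_card[OF assms(1)] True by simp
    from one_elem[OF fin_nb this pn(4)] show ?thesis by blast
  next
    case False
    then obtain l where l: "l \<in> Leaves" "l \<in> Nn y" using lf by blast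
    have lz: "l \<noteq> z" using l(2) assms(5) unfolding Nn_def by auto
    have ln: "l \<in> nb y" using l(2) pn(3) by blast
    have "card (nb y) \<le> 2" using nb_card[OF assms(1)] assms(4) by auto
    from two_elem[OF fin_nb this pn(4) ln lz[symmetric]] have "nb y = {z, l}" .
    thus ?thesis using l(2) by blast
  qed
  show "nb l \<subseteq> {y}" if l: "l \<in> Nn y" for l
  proof -
    have lL: "l \<in> Leaves" using l NnL by blast
    hence lP: "l \<in> P" and dl: "cdeg E l = 1" unfolding Leaves_def by auto
    have c: "card (nb l) \<le> 1" using nb_card[OF lP] dl by simp
    have "adj E l y" using l adj_sym unfolding Nn_def by blast
    hence "y \<in> nb l" using assms(1) unfolding nb_def by simp
    from one_elem[OF fin_nb c this] show ?thesis .
  qed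
qed

lemma B6: assumes "g \<in> Gp" shows "card (Ng g) \<le> 2" "Hall \<noteq> {} \<Longrightarrow> card (Ng g) + 2 * card (Ag g) \<le> 4"
proof -
  obtain w x where wx: "g = {w,x}" "adj E w x" "cdeg E w \<in> {1,2}" "cdeg E x \<in> {1,2}"
    using assms unfolding Gp_def by blast
  have gG: "g \<in> G" using assms unfolding Gp_def by auto
  have wP: "w \<in> P" and xP: "x \<in> P" using G_sub[OF gG] wx by auto
  have neq: "w \<noteq> x" using wx unfolding adj_def by auto
  have wS: "w \<notin> Sing" and xS: "x \<notin> Sing" using sing_grp[OF _ gG] wx neq unfolding Sing_def by auto
  have ax: "adj E x w" using wx(2) adj_sym by blast
  note pw = pn_node[OF wP xP wx(2) wx(3) xS]
  note px = pn_node[OF xP wP ax wx(4) wS]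
  have Ngeq: "Ng g = Nn w \<union> Nn x" unfolding Ng_def Nn_def wx by auto
  have finNn: "finite (Nn y)" for y using finP unfolding Nn_def Sing_def by auto
  have cN: "card (Ng g) \<le> card (Nn w) + card (Nn x)" unfolding Ngeq by (rule card_Un_le)
  thus "card (Ng g) \<le> 2" using pw px by linarith
  assume H: "Hall \<noteq> {}"
  have Ageq: "Ag g = ((Leaves \<inter> {w}) \<union> (Leaves \<inter> Nn w)) \<union> ((Leaves \<inter> {x}) \<union> (Leaves \<inter> Nn x))"
    using wx(1) unfolding Ag_def Ngeq by blast
  define vl where "vl y = card (Leaves \<inter> {y}) + card (Leaves \<inter> Nn y)" for y
  have cA: "card (Ag g) \<le> vl w + vl x" unfolding Ageq vl_def
    by (meson add_mono card_Un_le order_trans)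
  have val: "card (Nn y) + 2 * vl y \<le> 3" if "y \<in> P" "z \<in> P" "adj E y z" "cdeg E y \<in> {1,2}" "z \<notin> Sing" for y z
  proof -
    note p = pn_node[OF that]
    have cL: "card (Leaves \<inter> Nn y) \<le> card (Nn y)" using finNn by (simp add: card_mono)
    show ?thesis
    proof (cases "cdeg E y = 1")
      case True
      hence "Nn y = {}" using p by auto
      thus ?thesis unfolding vl_def using card_int_single[of Leaves y] by simp
    next
      case False
      hence "Leaves \<inter> {y} = {}" unfolding Leaves_def by auto
      thus ?thesis unfolding vl_def using cL p by auto
    qed
  qed
  have nl: "card (Nn y) + 2 * vl y \<le> 1" if "y \<in> P" "z \<in> P" "adj E y z" "cdeg E y \<in> {1,2}" "z \<notin> Sing" "\<not> leafy y" for y z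
  proof -
    have "Leaves \<inter> {y} = {}" "Leaves \<inter> Nn y = {}" using that(6) unfolding leafy_def by auto
    thus ?thesis unfolding vl_def using pn_node(1)[OF that(1-5)] by simp
  qed
  have notboth: "\<not> (leafy w \<and> leafy x)"
  proof
    assume lf: "leafy w \<and> leafy x"
    note lw = leafy_facts[OF wP xP wx(2) wx(3) xS] and lx = leafy_facts[OF xP wP ax wx(4) wS]
    define S where "S = {w,x} \<union> Nn w \<union> Nn x"
    have SP: "S \<subseteq> P" "S \<noteq> {}" unfolding S_def Nn_def Sing_def using wP xP by auto
    have cl: "\<forall>C\<in>S. \<forall>D\<in>P. adj E C D \<longrightarrow> D \<in> S"
    proof (intro ballI impI)
      fix C D assume C: "C \<in> S" and D: "D \<in> P" and a: "adj E C D"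
      hence Dn: "D \<in> nb C" unfolding nb_def by auto
      have "C = w \<or> C = x \<or> C \<in> Nn w \<or> C \<in> Nn x" using C unfolding S_def by auto
      moreover have "D \<in> S" if "C = w" using that Dn lw(1) lf unfolding S_def by blast
      moreover have "D \<in> S" if "C = x" using that Dn lx(1) lf unfolding S_def by blast
      moreover have "D \<in> S" if "C \<in> Nn w" using lw(3)[OF _ that] Dn lf unfolding S_def by blast
      moreover have "D \<in> S" if "C \<in> Nn x" using lx(3)[OF _ that] Dn lf unfolding S_def by blast
      ultimately show "D \<in> S" by blast
    qed
    have "S = P" using closed_all[OF SP cl] .
    moreover have "\<forall>C\<in>S. cdeg E C \<le> 2" using wx lw(2) lx(2) lf unfolding S_def Leaves_def by auto
    moreover obtain C where "C \<in> Hall" using H by blast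
    ultimately show False unfolding Hall_def by fastforce
  qed
  have "card (Nn w) + 2 * vl w + (card (Nn x) + 2 * vl x) \<le> 4"
  proof (cases "leafy w")
    case True
    hence "\<not> leafy x" using notboth by auto
    thus ?thesis using val[OF wP xP wx(2) wx(3) xS] nl[OF xP wP ax wx(4) wS] by simp
  next
    case False
    thus ?thesis using nl[OF wP xP wx(2) wx(3) xS] val[OF xP wP ax wx(4) wS] by simp
  qed
  thus "card (Ng g) + 2 * card (Ag g) \<le> 4" using cN cA by linarith
qed

end

context ufo_ctx begin

lemma Gp_elim: assumes "g \<in> Gp" obtains C D where "g = {C,D}" "adj E C D"
  using assms unfolding Gp_def by blast

lemma count: "6 * card G \<le> 5 * card P"
proof -
  have finGs: "finite Gs" "finite Gp" "finite Gst"
    using finite_subset[OF _ finG] unfolding Gs_def Gp_def Gst_def by auto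
  have cP: "card P = sum card G"
  proof -
    have "pairwise disjnt G" using Gdisj unfolding pairwise_def disjnt_def by blast
    from card_Union_disjoint[OF this fing] show ?thesis using GU by simp
  qed
  have spl: "sum f G = sum f Gs + sum f Gp + sum f Gst" for f :: "'a set set \<Rightarrow> nat"
  proof -
    have d1: "(Gs \<union> Gp) \<inter> Gst = {}" using G_disj by blast
    have "sum f G = sum f (Gs \<union> Gp \<union> Gst)" using G_split by (rule arg_cong)
    also have "\<dots> = sum f (Gs \<union> Gp) + sum f Gst"
      by (rule sum.union_disjoint) (use finGs d1 in auto)
    also have "sum f (Gs \<union> Gp) = sum f Gs + sum f Gp"
      by (rule sum.union_disjoint) (use finGs G_disj(1) in auto)
    finally show ?thesis .
  qed
  have cG: "card G = card Gs + card Gp + card Gst"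
    using spl[of "\<lambda>_. 1"] by simp
  have s1: "sum card Gs = card Gs"
  proof -
    have "sum card Gs = sum (\<lambda>_. 1) Gs" by (rule sum.cong) (auto simp: Gs_def)
    thus ?thesis by simp
  qed
  have s2: "sum card Gp = 2 * card Gp"
  proof -
    have "card g = 2" if gp: "g \<in> Gp" for g
    proof -
      obtain C D where CD: "g = {C,D}" "adj E C D" using Gp_elim[OF gp] by metis
      have "C \<noteq> D" using CD(2) unfolding adj_def by blast
      thus ?thesis using CD(1) by simp
    qed
    hence "sum card Gp = sum (\<lambda>_. 2) Gp" by (intro sum.cong) auto
    thus ?thesis by simp
  qed
  have GsSing: "Gs = (\<lambda>C. {C}) ` Sing"
  proof (intro equalityI subsetI)
    fix g assume g: "g \<in> Gs"
    then obtain C where C: "g = {C}" "g \<in> G" unfolding Gs_def by auto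
    hence "C \<in> P" using G_sub by auto
    hence "C \<in> Sing" using C unfolding Sing_def by simp
    thus "g \<in> (\<lambda>C. {C}) ` Sing" using C by blast
  next
    fix g assume "g \<in> (\<lambda>C. {C}) ` Sing"
    then obtain C where "C \<in> Sing" "g = {C}" by blast
    thus "g \<in> Gs" unfolding Sing_def Gs_def by auto
  qed
  have cGs: "card Gs = card Sing" unfolding GsSing by (rule card_image) (auto simp: inj_on_def)
  define h where "h = card Hall"
  define s where "s = card Gs"
  define p where "p = card Gp"
  define t where "t = card Gst"
  define T where "T = sum card Gst"
  define N where "N = (\<Sum>g\<in>Gp. card (Ng g))"
  define A where "A = (\<Sum>g\<in>Gp. card (Ag g))"
  define LL where "LL = (\<Sum>g\<in>Gst. card (Leaves \<inter> g))"
  define b where "b = card Bset"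
  define lv where "lv = card Leaves"
  have f1: "s \<le> N + b + h" using B1 cGs unfolding s_def N_def h_def b_def by simp
  have f3: "h + 2 \<le> lv" using B3 unfolding h_def lv_def .
  have f4: "lv \<le> LL + A" using B4 unfolding LL_def A_def lv_def .
  have f5: "LL + t \<le> T"
  proof -
    have "(\<Sum>g\<in>Gst. card (Leaves \<inter> g) + 1) \<le> (\<Sum>g\<in>Gst. card g)" using B5 by (rule sum_mono)
    moreover have "(\<Sum>g\<in>Gst. card (Leaves \<inter> g) + 1) = LL + t" unfolding LL_def t_def sum.distrib by simp
    ultimately show ?thesis unfolding T_def by simp
  qed
  have f6: "N \<le> 2 * p"
  proof -
    have "(\<Sum>g\<in>Gp. card (Ng g)) \<le> (\<Sum>g\<in>Gp. 2)" using B6(1) by (rule sum_mono)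
    thus ?thesis unfolding N_def p_def by simp
  qed
  have f8: "2 * t \<le> T"
  proof -
    have "(\<Sum>g\<in>Gst. 2) \<le> (\<Sum>g\<in>Gst. card g)" using B5' by (rule sum_mono)
    thus ?thesis unfolding t_def T_def by simp
  qed
  have goal: "6 * s + 6 * p + 6 * t \<le> 5 * s + 10 * p + 5 * T"
  proof (cases "h = 0")
    case True
    hence H: "Hall = {}" using finite_subset[OF _ finP, of Hall] unfolding h_def Hall_def by auto
    have "Bset = {}"
    proof (rule ccontr)
      assume "Bset \<noteq> {}"
      then obtain c where c: "c \<in> Bset" by auto
      hence cP: "c \<in> P" and dc: "cdeg E c = 2" unfolding Bset_def Sing_def by auto
      obtain D where D: "D \<in> P" "adj E c D" using has_nb[OF cP] dc by auto
      hence "D \<in> Hall" using c unfolding Bset_def Hall_def by auto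
      thus False using H by auto
    qed
    hence "b = 0" unfolding b_def by simp
    thus ?thesis using f1 f6 f8 True by linarith
  next
    case False
    hence HH: "Hall \<noteq> {}" unfolding h_def by auto
    have f2: "b + 1 \<le> h" using B2[OF HH] unfolding b_def h_def .
    have "(\<Sum>g\<in>Gp. card (Ng g) + 2 * card (Ag g)) \<le> (\<Sum>g\<in>Gp. 4)" using B6(2)[OF _ HH] by (rule sum_mono)
    moreover have "(\<Sum>g\<in>Gp. card (Ng g) + 2 * card (Ag g)) = N + 2 * A"
      unfolding N_def A_def sum.distrib sum_distrib_left[symmetric] by simp
    ultimately have f7: "N + 2 * A \<le> 4 * p" unfolding p_def by simp
    show ?thesis using f1 f2 f3 f4 f5 f7 f8 by linarith
  qed
  have "card P = s + 2 * p + T" using cP spl[of card] s1 s2 unfolding s_def p_def T_def by simp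
  moreover have "card G = s + p + t" using cG unfolding s_def p_def t_def by simp
  ultimately show ?thesis using goal by linarith
qed

lemma cardQ: "card ((\<lambda>g. \<Union>g) ` G) = card G"
proof (rule card_image, rule inj_onI)
  fix g1 g2 assume g: "g1 \<in> G" "g2 \<in> G" "\<Union>g1 = \<Union>g2"
  obtain C where C: "C \<in> g1" using Gne g by blast
  have CP: "C \<in> P" using G_sub[OF g(1)] C by blast
  obtain x where x: "x \<in> C" using Pne CP by blast
  then obtain D where D: "D \<in> g2" "x \<in> D" using g C by blast
  have DP: "D \<in> P" using G_sub[OF g(2)] D(1) by blast
  have "C = D" using Peq[OF CP DP x D(2)] .
  thus "g1 = g2" using grp_uniq[OF g(1) g(2) C] D(1) by simp
qed

end

lemma step_bound:
  assumes tr: "is_tree V E" and part: "cluster_partition V E P" and c2: "card P \<ge> 2" and st: "ufo_step E P Q"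
  shows "6 * card Q \<le> 5 * card P"
proof -
  obtain G where G1: "\<Union>G = P" and G2: "\<forall>g\<in>G. g \<noteq> {}"
     and G3: "\<forall>g1\<in>G. \<forall>g2\<in>G. g1 \<noteq> g2 \<longrightarrow> g1 \<inter> g2 = {}"
     and G4: "\<forall>g\<in>G. valid_group E P g"
     and G5: "\<forall>H\<in>P. cdeg E H \<ge> 3 \<longrightarrow>
        (\<forall>C\<in>P. adj E H C \<and> cdeg E C = 1 \<longrightarrow> (\<exists>g\<in>G. H \<in> g \<and> C \<in> g))"
     and G6: "\<forall>C\<in>P. \<forall>D\<in>P. {C} \<in> G \<and> {D} \<in> G \<and> adj E C D \<and>
        cdeg E C \<in> {1, 2} \<and> cdeg E D \<in> {1, 2} \<longrightarrow> False"
     and G7: "Q = (\<lambda>g. \<Union>g) ` G"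
    using st unfolding ufo_step_def by (elim exE conjE) (rule that; assumption)
  interpret u: ufo_ctx V E P G
    by (rule ufo_ctx.intro[OF tr part c2 G1 G2 G3 G4 G5 G6])
  show ?thesis using u.count u.cardQ G7 by simp
qed

theorem lemmaB17:
  fixes V :: "'a set" and E :: "'a set set" and Ls :: "'a set set list" and l :: nat
  assumes "ufo_tree V E Ls" and "0 < l" and "l < length Ls"
  shows "real (card (Ls ! l)) \<le> 5 / 6 * real (card (Ls ! (l - 1)))"
proof -
  define i where "i = l - 1"
  have li: "l = Suc i" using assms(2) unfolding i_def by simp
  have tr: "is_tree V E" using assms(1) unfolding ufo_tree_def by simp
  have il: "i < length Ls" using assms(3) li by simp
  have part: "cluster_partition V E (Ls ! i)" using assms(1) il unfolding ufo_tree_def by simp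
  have sl: "Suc i < length Ls" using assms(3) li by simp
  have st: "card (Ls ! i) \<ge> 2 \<and> ufo_step E (Ls ! i) (Ls ! Suc i)"
    using assms(1) sl unfolding ufo_tree_def by simp
  have "6 * card (Ls ! Suc i) \<le> 5 * card (Ls ! i)"
    using step_bound[OF tr part] st by simp
  hence "6 * real (card (Ls ! l)) \<le> 5 * real (card (Ls ! i))" unfolding li by linarith
  thus ?thesis unfolding i_def by simp
qed

end
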